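(* Let $X$ be a set and $\sqsubseteq$ a binary relation on pairs of finite subsets of $X$ satisfying ($\iota_0$)–($\iota_4$). For finite $a\subseteq X$ define $$\mathrm{conv}_{\mathcal L}(a)=\{p\in X:\{p\}\sqsubseteq a\},\qquad \mathrm{conv}_{\mathcal U}(a)=\{p\in X: a\sqsubseteq\{p\}\},$$ and let $\mathcal L$ (resp. $\mathcal U$) be the family of all $A\subseteq X$ such that $\mathrm{conv}_{\mathcal L}(a)\subseteq A$ (resp. $\mathrm{conv}_{\mathcal U}(a)\subseteq A$) for every finite $a\subseteq A$. Then $(X,\mathcal L,\mathcal U)$ is a normal bi-convexity space satisfying, for all finite $a,b\subseteq X$, $$a\sqsubseteq b\iff \mathrm{conv}_{\mathcal U}(a)\cap\mathrm{conv}_{\mathcal L}(b)\neq\emptyset.$$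
   Context: Axioms for a relation $\sqsubseteq$ on pairs of finite subsets of $X$ ($a,b,a',b',a_i,b_i$ finite, $p,q\in X$): ($\iota_0$) $\emptyset\not\sqsubseteq\emptyset$; ($\iota_1$) $a\sqsubseteq b$, $a\subseteq a'$, $b\subseteq b'$ imply $a'\sqsubseteq b'$; ($\iota_2$) $\{p\}\sqsubseteq\{q\}$ and $\{q\}\sqsubseteq\{p\}$ hold iff $p=q$; ($\iota_3$) $(a_0\cup\{p\})\sqsubseteq b_0$ and $a_1\sqsubseteq(b_1\cup\{p\})$ imply $(a_0\cup a_1)\sqsubseteq(b_0\cup b_1)$; ($\iota_4$) if $a\sqsubseteq b$ then there is $p\in X$ with $a\sqsubseteq\{p\}$ and $\{p\}\sqsubseteq b$. A convexity on $X$ is a family of subsets of $X$ closed under arbitrary intersections (so $X$ belongs to it) and unions of chains; $\mathrm{conv}(A)$ is the intersection of all convex sets containing $A$. A bi-convexity space $(X,\mathcal L,\mathcal U)$ consists of two convexities on $X$. It is normal if (N1) for all $x\neq y$ in $X$, either $\mathrm{conv}_{\mathcal L}\{x\}\cap\mathrm{conv}_{\mathcal U}\{y\}=\emptyset$ or $\mathrm{conv}_{\mathcal U}\{x\}\cap\mathrm{conv}_{\mathcal L}\{y\}=\emptyset$; and (N2) for all disjoint $A\in\mathcal L$, $B\in\mathcal U$ there is $H\in\mathcal U$ with $X\setminus H\in\mathcal L$, $B\subseteq H$ and $A\cap H=\emptyset$. *)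

theory Defs
  imports Main
begin

definition convexity :: "'a set \<Rightarrow> 'a set set \<Rightarrow> bool" where
  "convexity X C \<longleftrightarrow> C \<subseteq> Pow X \<and> X \<in> C
     \<and> (\<forall>F. F \<subseteq> C \<and> F \<noteq> {} \<longrightarrow> \<Inter>F \<in> C)
     \<and> (\<forall>F. F \<subseteq> C \<and> F \<noteq> {} \<and> Complete_Partial_Order.chain (\<subseteq>) F \<longrightarrow> \<Union>F \<in> C)"

definition conv_hull :: "'a set \<Rightarrow> 'a set set \<Rightarrow> 'a set \<Rightarrow> 'a set" where
  "conv_hull X C A = X \<inter> \<Inter>{K \<in> C. A \<subseteq> K}"

definition biconvexity_space :: "'a set \<Rightarrow> 'a set set \<Rightarrow> 'a set set \<Rightarrow> bool" where
  "biconvexity_space X L U \<longleftrightarrow> convexity X L \<and> convexity X U"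

definition normal_biconvexity :: "'a set \<Rightarrow> 'a set set \<Rightarrow> 'a set set \<Rightarrow> bool" where
  "normal_biconvexity X L U \<longleftrightarrow> biconvexity_space X L U
     \<and> (\<forall>x\<in>X. \<forall>y\<in>X. x \<noteq> y \<longrightarrow>
          conv_hull X L {x} \<inter> conv_hull X U {y} = {}
        \<or> conv_hull X U {x} \<inter> conv_hull X L {y} = {})
     \<and> (\<forall>A\<in>L. \<forall>B\<in>U. A \<inter> B = {} \<longrightarrow>
          (\<exists>H\<in>U. X - H \<in> L \<and> B \<subseteq> H \<and> A \<inter> H = {}))"

definition iota_axioms :: "'a set \<Rightarrow> ('a set \<Rightarrow> 'a set \<Rightarrow> bool) \<Rightarrow> bool" where
  "iota_axioms X R \<longleftrightarrow>
     \<not> R {} {}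
   \<and> (\<forall>a b a' b'. finite a' \<and> finite b' \<and> a' \<subseteq> X \<and> b' \<subseteq> X \<and> R a b \<and> a \<subseteq> a' \<and> b \<subseteq> b'
        \<longrightarrow> R a' b')
   \<and> (\<forall>p\<in>X. \<forall>q\<in>X. (R {p} {q} \<and> R {q} {p}) \<longleftrightarrow> p = q)
   \<and> (\<forall>a0 b0 a1 b1 p. finite a0 \<and> finite b0 \<and> finite a1 \<and> finite b1
        \<and> a0 \<subseteq> X \<and> b0 \<subseteq> X \<and> a1 \<subseteq> X \<and> b1 \<subseteq> X \<and> p \<in> X
        \<and> R (a0 \<union> {p}) b0 \<and> R a1 (b1 \<union> {p}) \<longrightarrow> R (a0 \<union> a1) (b0 \<union> b1))
   \<and> (\<forall>a b. finite a \<and> finite b \<and> a \<subseteq> X \<and> b \<subseteq> X \<and> R a b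
        \<longrightarrow> (\<exists>p\<in>X. R a {p} \<and> R {p} b))"

definition convL :: "'a set \<Rightarrow> ('a set \<Rightarrow> 'a set \<Rightarrow> bool) \<Rightarrow> 'a set \<Rightarrow> 'a set" where
  "convL X R a = {p \<in> X. R {p} a}"

definition convU :: "'a set \<Rightarrow> ('a set \<Rightarrow> 'a set \<Rightarrow> bool) \<Rightarrow> 'a set \<Rightarrow> 'a set" where
  "convU X R a = {p \<in> X. R a {p}}"

definition famL :: "'a set \<Rightarrow> ('a set \<Rightarrow> 'a set \<Rightarrow> bool) \<Rightarrow> 'a set set" where
  "famL X R = {A. A \<subseteq> X \<and> (\<forall>a. finite a \<and> a \<subseteq> A \<longrightarrow> convL X R a \<subseteq> A)}"

definition famU :: "'a set \<Rightarrow> ('a set \<Rightarrow> 'a set \<Rightarrow> bool) \<Rightarrow> 'a set set" where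
  "famU X R = {A. A \<subseteq> X \<and> (\<forall>a. finite a \<and> a \<subseteq> A \<longrightarrow> convU X R a \<subseteq> A)}"

end

theory Submission
  imports Defs
begin

lemma fin_chain:
  assumes "finite a" "a \<subseteq> \<Union>F" "F \<noteq> {}" "Complete_Partial_Order.chain (\<subseteq>) F"
  shows "\<exists>K\<in>F. a \<subseteq> K"
proof -
  have "subset.chain F F" using assms(4) by (auto simp: subset_chain_def chain_def)
  then show ?thesis using finite_subset_Union_chain[OF assms(1-3)] by metis
qed

lemma convexity_famL: "convexity X (famL X R)"
  unfolding convexity_def
proof (intro conjI allI impI)
  show "famL X R \<subseteq> Pow X" by (auto simp: famL_def)
  show "X \<in> famL X R" by (auto simp: famL_def convL_def)
next
  fix F assume F: "F \<subseteq> famL X R \<and> F \<noteq> {}"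
  then show "\<Inter>F \<in> famL X R" unfolding famL_def by blast
next
  fix F assume F: "F \<subseteq> famL X R \<and> F \<noteq> {} \<and> Complete_Partial_Order.chain (\<subseteq>) F"
  show "\<Union>F \<in> famL X R" unfolding famL_def
  proof (intro CollectI conjI allI impI)
    show "\<Union>F \<subseteq> X" using F by (auto simp: famL_def)
    fix a assume a: "finite a \<and> a \<subseteq> \<Union>F"
    then obtain K where "K \<in> F" "a \<subseteq> K" using fin_chain F by meson
    moreover have "K \<in> famL X R" using F \<open>K \<in> F\<close> by blast
    ultimately have "convL X R a \<subseteq> K" using a unfolding famL_def by blast
    then show "convL X R a \<subseteq> \<Union>F" using \<open>K \<in> F\<close> by blast
  qed
qed

lemma famU_sym: "famU X R = famL X (\<lambda>a b. R b a)"
  by (simp add: famU_def famL_def convU_def convL_def)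

lemma convU_sym: "convU X R = convL X (\<lambda>a b. R b a)"
  by (rule ext) (simp add: convU_def convL_def)

lemma iota_sym: assumes "iota_axioms X R" shows "iota_axioms X (\<lambda>a b. R b a)"
proof -
  have 3: "\<And>a0 b0 a1 b1 p. finite a0 \<and> finite b0 \<and> finite a1 \<and> finite b1
        \<and> a0 \<subseteq> X \<and> b0 \<subseteq> X \<and> a1 \<subseteq> X \<and> b1 \<subseteq> X \<and> p \<in> X
        \<and> R (a0 \<union> {p}) b0 \<and> R a1 (b1 \<union> {p}) \<longrightarrow> R (a0 \<union> a1) (b0 \<union> b1)"
    using assms unfolding iota_axioms_def by blast
  have "\<And>a0 b0 a1 b1 p. finite a0 \<and> finite b0 \<and> finite a1 \<and> finite b1
        \<and> a0 \<subseteq> X \<and> b0 \<subseteq> X \<and> a1 \<subseteq> X \<and> b1 \<subseteq> X \<and> p \<in> X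
        \<and> R b0 (a0 \<union> {p}) \<and> R (b1 \<union> {p}) a1 \<longrightarrow> R (b0 \<union> b1) (a0 \<union> a1)"
  proof
    fix a0 b0 a1 b1 p assume h: "finite a0 \<and> finite b0 \<and> finite a1 \<and> finite b1
        \<and> a0 \<subseteq> X \<and> b0 \<subseteq> X \<and> a1 \<subseteq> X \<and> b1 \<subseteq> X \<and> p \<in> X
        \<and> R b0 (a0 \<union> {p}) \<and> R (b1 \<union> {p}) a1"
    have "R (b1 \<union> b0) (a1 \<union> a0)" using 3[of b1 a1 b0 a0 p] h by blast
    then show "R (b0 \<union> b1) (a0 \<union> a1)" by (simp add: Un_commute)
  qed
  then have 3: "\<forall>a0 b0 a1 b1 p. finite a0 \<and> finite b0 \<and> finite a1 \<and> finite b1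
        \<and> a0 \<subseteq> X \<and> b0 \<subseteq> X \<and> a1 \<subseteq> X \<and> b1 \<subseteq> X \<and> p \<in> X
        \<and> R b0 (a0 \<union> {p}) \<and> R (b1 \<union> {p}) a1 \<longrightarrow> R (b0 \<union> b1) (a0 \<union> a1)" by blast
  note h = assms[unfolded iota_axioms_def]
  note h0 = h[THEN conjunct1] and h1 = h[THEN conjunct2, THEN conjunct1]
    and h2 = h[THEN conjunct2, THEN conjunct2, THEN conjunct1]
    and h4 = h[THEN conjunct2, THEN conjunct2, THEN conjunct2, THEN conjunct2]
  show ?thesis unfolding iota_axioms_def
  proof (intro conjI)
    show "\<not> R {} {}" by (rule h0)
    show "\<forall>a b a' b'. finite a' \<and> finite b' \<and> a' \<subseteq> X \<and> b' \<subseteq> X \<and> R b a \<and> a \<subseteq> a' \<and> b \<subseteq> b'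
        \<longrightarrow> R b' a'" using h1 by blast
    show "\<forall>p\<in>X. \<forall>q\<in>X. (R {q} {p} \<and> R {p} {q}) \<longleftrightarrow> p = q" using h2 by blast
    show "\<forall>a b. finite a \<and> finite b \<and> a \<subseteq> X \<and> b \<subseteq> X \<and> R b a
        \<longrightarrow> (\<exists>p\<in>X. R {p} a \<and> R b {p})" using h4 by blast
  qed fact
qed

locale iota =
  fixes X :: "'a set" and R :: "'a set \<Rightarrow> 'a set \<Rightarrow> bool"
  assumes ax: "iota_axioms X R"
begin

lemma A1: "\<forall>a b a' b'. finite a' \<and> finite b' \<and> a' \<subseteq> X \<and> b' \<subseteq> X \<and> R a b \<and> a \<subseteq> a' \<and> b \<subseteq> b'
        \<longrightarrow> R a' b'"
  using ax by (simp only: iota_axioms_def) (elim conjE, assumption)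
lemma A2: "\<forall>p\<in>X. \<forall>q\<in>X. (R {p} {q} \<and> R {q} {p}) \<longleftrightarrow> p = q"
  using ax by (simp only: iota_axioms_def) (elim conjE, assumption)
lemma A3: "\<forall>a0 b0 a1 b1 p. finite a0 \<and> finite b0 \<and> finite a1 \<and> finite b1
        \<and> a0 \<subseteq> X \<and> b0 \<subseteq> X \<and> a1 \<subseteq> X \<and> b1 \<subseteq> X \<and> p \<in> X
        \<and> R (a0 \<union> {p}) b0 \<and> R a1 (b1 \<union> {p}) \<longrightarrow> R (a0 \<union> a1) (b0 \<union> b1)"
  using ax by (simp only: iota_axioms_def) (elim conjE, assumption)
lemma A4: "\<forall>a b. finite a \<and> finite b \<and> a \<subseteq> X \<and> b \<subseteq> X \<and> R a b
        \<longrightarrow> (\<exists>p\<in>X. R a {p} \<and> R {p} b)"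
  using ax by (simp only: iota_axioms_def) (elim conjE, assumption)

lemma ax1: "finite a' \<Longrightarrow> finite b' \<Longrightarrow> a' \<subseteq> X \<Longrightarrow> b' \<subseteq> X \<Longrightarrow> R a b \<Longrightarrow> a \<subseteq> a' \<Longrightarrow> b \<subseteq> b' \<Longrightarrow> R a' b'"
  using spec[OF spec[OF spec[OF spec[OF A1, of a], of b], of a'], of b'] by blast

lemma ax2a: "p \<in> X \<Longrightarrow> R {p} {p}"
  using bspec[OF bspec[OF A2, of p], of p] by simp

lemma ax2b: "p \<in> X \<Longrightarrow> q \<in> X \<Longrightarrow> R {p} {q} \<Longrightarrow> R {q} {p} \<Longrightarrow> p = q"
  using bspec[OF bspec[OF A2, of p], of q] by simp

lemma ax3: "finite a0 \<Longrightarrow> finite b0 \<Longrightarrow> finite a1 \<Longrightarrow> finite b1 \<Longrightarrow>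
   a0 \<subseteq> X \<Longrightarrow> b0 \<subseteq> X \<Longrightarrow> a1 \<subseteq> X \<Longrightarrow> b1 \<subseteq> X \<Longrightarrow> p \<in> X \<Longrightarrow>
   R (a0 \<union> {p}) b0 \<Longrightarrow> R a1 (b1 \<union> {p}) \<Longrightarrow> R (a0 \<union> a1) (b0 \<union> b1)"
  using spec[OF spec[OF spec[OF spec[OF spec[OF A3, of a0], of b0], of a1], of b1], of p] by blast

lemma ax4: "finite a \<Longrightarrow> finite b \<Longrightarrow> a \<subseteq> X \<Longrightarrow> b \<subseteq> X \<Longrightarrow> R a b \<Longrightarrow> \<exists>p\<in>X. R a {p} \<and> R {p} b"
  using spec[OF spec[OF A4, of a], of b] by blast

lemma trans: "finite a \<Longrightarrow> finite b \<Longrightarrow> a \<subseteq> X \<Longrightarrow> b \<subseteq> X \<Longrightarrow> p \<in> X \<Longrightarrow>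
   R a {p} \<Longrightarrow> R {p} b \<Longrightarrow> R a b"
  using ax3[of "{}" b a "{}" p] by simp

lemma cut: "p \<in> X \<Longrightarrow> q \<in> X \<Longrightarrow> finite a \<Longrightarrow> finite b \<Longrightarrow> a \<subseteq> X \<Longrightarrow> b \<subseteq> X \<Longrightarrow>
   R {p} (a \<union> {q}) \<Longrightarrow> R {q} b \<Longrightarrow> R {p} (a \<union> b)"
  using ax3[of "{}" b "{p}" a q] by (simp add: Un_commute)

definition hullL :: "'a set \<Rightarrow> 'a set" where
  "hullL S = {q \<in> X. \<exists>a. finite a \<and> a \<subseteq> S \<and> R {q} a}"

lemma hull_key:
  assumes "finite c" "S \<subseteq> X"
  shows "c \<subseteq> hullL S \<Longrightarrow> finite d \<Longrightarrow> d \<subseteq> X \<Longrightarrow> q \<in> X \<Longrightarrow> R {q} (d \<union> c) \<Longrightarrow>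
     \<exists>a. finite a \<and> a \<subseteq> S \<and> R {q} (d \<union> a)"
  using assms(1)
proof (induction c arbitrary: d rule: finite_induct)
  case empty
  then show ?case by (intro exI[of _ "{}"]) simp
next
  case (insert x c)
  from insert.prems(1) obtain ax where x: "x \<in> X" "finite ax" "ax \<subseteq> S" "R {x} ax"
    by (auto simp: hullL_def)
  have cX: "c \<subseteq> X" using insert.prems(1) by (auto simp: hullL_def)
  have "R {q} ((d \<union> c) \<union> {x})" using insert.prems by (simp add: Un_ac)
  then have "R {q} ((d \<union> c) \<union> ax)"
    using cut[of q x "d \<union> c" ax] x insert cX assms(2) by auto
  then have "R {q} ((d \<union> ax) \<union> c)" by (simp add: Un_ac)
  then obtain a where "finite a" "a \<subseteq> S" "R {q} ((d \<union> ax) \<union> a)"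
    using insert.IH[of "d \<union> ax"] insert.prems x assms(2) by auto
  then show ?case using x by (intro exI[of _ "ax \<union> a"]) (auto simp: Un_ac)
qed

lemma hullL_fam: "S \<subseteq> X \<Longrightarrow> hullL S \<in> famL X R"
  unfolding famL_def
proof (intro CollectI conjI allI impI)
  show "hullL S \<subseteq> X" by (auto simp: hullL_def)
  fix c assume S: "S \<subseteq> X" and c: "finite c \<and> c \<subseteq> hullL S"
  show "convL X R c \<subseteq> hullL S"
  proof
    fix p assume "p \<in> convL X R c"
    then have p: "p \<in> X" "R {p} c" by (auto simp: convL_def)
    then obtain a where "finite a" "a \<subseteq> S" "R {p} ({} \<union> a)"
      using hull_key[of c S "{}" p] c S by auto
    then show "p \<in> hullL S" using p by (auto simp: hullL_def)
  qed
qed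

lemma hullL_sub: "S \<subseteq> X \<Longrightarrow> S \<subseteq> hullL S"
  unfolding hullL_def using ax2a by blast

lemma hull_single: "x \<in> X \<Longrightarrow> q \<in> hullL {x} \<Longrightarrow> R {q} {x}"
  unfolding hullL_def
proof clarify
  fix a assume "x \<in> X" "q \<in> X" "finite a" "a \<subseteq> {x}" "R {q} a"
  then show "R {q} {x}" using ax1[of "{q}" "{x}" "{q}" a] by auto
qed

end

lemma conv_hull_sub: "K \<in> C \<Longrightarrow> A \<subseteq> K \<Longrightarrow> conv_hull X C A \<subseteq> K"
  unfolding conv_hull_def by blast

lemma conv_hull_X: "conv_hull X C A \<subseteq> X"
  unfolding conv_hull_def by blast


lemma iota_I: "iota_axioms X R \<Longrightarrow> iota X R"
  by (rule iota.intro)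

lemma N1:
  assumes ax: "iota_axioms X R" and x: "x \<in> X" and y: "y \<in> X" and xy: "x \<noteq> y"
  shows "conv_hull X (famL X R) {x} \<inter> conv_hull X (famU X R) {y} = {}
        \<or> conv_hull X (famU X R) {x} \<inter> conv_hull X (famL X R) {y} = {}"
proof (rule ccontr)
  interpret I: iota X R by (rule iota_I[OF ax])
  interpret J: iota X "\<lambda>a b. R b a" by (rule iota_I[OF iota_sym[OF ax]])
  assume "\<not> ?thesis"
  then obtain z w where z: "z \<in> conv_hull X (famL X R) {x}" "z \<in> conv_hull X (famU X R) {y}"
    and w: "w \<in> conv_hull X (famU X R) {x}" "w \<in> conv_hull X (famL X R) {y}" by blast
  have zX: "z \<in> X" "w \<in> X" using subsetD[OF conv_hull_X z(1)] subsetD[OF conv_hull_X w(1)] by simp_all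
  have hL: "conv_hull X (famL X R) {u} \<subseteq> I.hullL {u}" if "u \<in> X" for u
    using that conv_hull_sub[OF I.hullL_fam[of "{u}"]] I.hullL_sub[of "{u}"] by simp
  have hU: "conv_hull X (famU X R) {u} \<subseteq> J.hullL {u}" if "u \<in> X" for u
    using that conv_hull_sub[OF J.hullL_fam[of "{u}"]] J.hullL_sub[of "{u}"] by (simp add: famU_sym)
  have "R {z} {x}" using I.hull_single[OF x] hL[OF x] z(1) by blast
  moreover have "R {y} {z}" using J.hull_single[OF y] hU[OF y] z(2) by blast
  ultimately have 1: "R {y} {x}" using I.trans[of "{y}" "{x}" z] x y zX by auto
  have "R {w} {y}" using I.hull_single[OF y] hL[OF y] w(2) by blast
  moreover have "R {x} {w}" using J.hull_single[OF x] hU[OF x] w(1) by blast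
  ultimately have 2: "R {x} {y}" using I.trans[of "{x}" "{y}" w] x y zX by auto
  show False using I.ax2b[OF x y 2 1] xy by simp
qed

lemma convexity_famU: "convexity X (famU X R)"
  by (simp add: famU_sym convexity_famL)

lemma chain_union_famL:
  assumes "F \<subseteq> famL X R" "F \<noteq> {}" "\<forall>S\<in>F. \<forall>T\<in>F. S \<subseteq> T \<or> T \<subseteq> S"
  shows "\<Union>F \<in> famL X R"
proof -
  have h: "\<forall>F. F \<subseteq> famL X R \<and> F \<noteq> {} \<and> Complete_Partial_Order.chain (\<subseteq>) F \<longrightarrow> \<Union>F \<in> famL X R"
    using convexity_famL[of X R] unfolding convexity_def by (elim conjE)
  have "Complete_Partial_Order.chain (\<subseteq>) F" using assms(3) by (simp add: chain_def)
  then show ?thesis using spec[OF h, of F] assms(1,2) by blast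
qed

lemma N2:
  assumes ax: "iota_axioms X R" and A: "A \<in> famL X R" and B: "B \<in> famU X R" and AB: "A \<inter> B = {}"
  shows "\<exists>H\<in>famU X R. X - H \<in> famL X R \<and> B \<subseteq> H \<and> A \<inter> H = {}"
proof -
  interpret I: iota X R by (rule iota_I[OF ax])
  interpret J: iota X "\<lambda>a b. R b a" by (rule iota_I[OF iota_sym[OF ax]])
  define P where "P = {S :: ('a+'a) set. Inl -` S \<in> famL X R \<and> Inr -` S \<in> famU X R
     \<and> A \<subseteq> Inl -` S \<and> B \<subseteq> Inr -` S \<and> Inl -` S \<inter> Inr -` S = {}}"
  have "\<exists>M\<in>P. \<forall>S\<in>P. M \<subseteq> S \<longrightarrow> S = M"
  proof (rule Zorn_Lemma2, intro ballI)
    fix C assume C: "C \<in> chains P"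
    show "\<exists>U\<in>P. \<forall>S\<in>C. S \<subseteq> U"
    proof (cases "C = {}")
      case True
      have e1: "Inl -` (Inl ` A \<union> Inr ` B) = A" and e2: "Inr -` (Inl ` A \<union> Inr ` B) = B" by auto
      have "Inl ` A \<union> Inr ` B \<in> P" unfolding P_def using e1 e2 A B AB by simp
      then show ?thesis using True by blast
    next
      case False
      have CP: "C \<subseteq> P" and ch: "\<forall>S\<in>C. \<forall>T\<in>C. S \<subseteq> T \<or> T \<subseteq> S"
        using C by (auto simp: chains_def chain_subset_def)
      have L: "Inl -` \<Union>C = \<Union>((\<lambda>S. Inl -` S) ` C)" by auto
      have R: "Inr -` \<Union>C = \<Union>((\<lambda>S. Inr -` S) ` C)" by auto
      have chL: "\<forall>S\<in>(\<lambda>S. Inl -` S) ` C. \<forall>T\<in>(\<lambda>S. Inl -` S) ` C. S \<subseteq> T \<or> T \<subseteq> S"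
      proof (intro ballI)
        fix S T assume "S \<in> (\<lambda>S. Inl -` S) ` C" "T \<in> (\<lambda>S. Inl -` S) ` C"
        then obtain S' T' where "S' \<in> C" "T' \<in> C" "S = Inl -` S'" "T = Inl -` T'" by blast
        then show "S \<subseteq> T \<or> T \<subseteq> S" using ch vimage_mono by metis
      qed
      have chR: "\<forall>S\<in>(\<lambda>S. Inr -` S) ` C. \<forall>T\<in>(\<lambda>S. Inr -` S) ` C. S \<subseteq> T \<or> T \<subseteq> S"
      proof (intro ballI)
        fix S T assume "S \<in> (\<lambda>S. Inr -` S) ` C" "T \<in> (\<lambda>S. Inr -` S) ` C"
        then obtain S' T' where "S' \<in> C" "T' \<in> C" "S = Inr -` S'" "T = Inr -` T'" by blast
        then show "S \<subseteq> T \<or> T \<subseteq> S" using ch vimage_mono by metis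
      qed
      have 1: "Inl -` \<Union>C \<in> famL X R" unfolding L
        by (rule chain_union_famL[OF _ _ chL]) (use CP False in \<open>auto simp: P_def\<close>)
      have 2: "Inr -` \<Union>C \<in> famU X R" unfolding R famU_sym
        by (rule chain_union_famL[OF _ _ chR]) (use CP False in \<open>auto simp: P_def famU_sym\<close>)
      have 3: "Inl -` \<Union>C \<inter> Inr -` \<Union>C = {}"
      proof (rule ccontr)
        assume "\<not> ?thesis"
        then obtain x S T where "S \<in> C" "T \<in> C" "Inl x \<in> S" "Inr x \<in> T" by auto
        then obtain V where "V \<in> C" "Inl x \<in> V" "Inr x \<in> V" using ch by blast
        then have "V \<in> P" "x \<in> Inl -` V \<inter> Inr -` V" using CP by auto
        then show False unfolding P_def by blast
      qed
      obtain S0 where S0: "S0 \<in> C" using False by blast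
      then have "S0 \<in> P" using CP by blast
      then have "A \<subseteq> Inl -` S0" "B \<subseteq> Inr -` S0" unfolding P_def by simp_all
      then have 4: "A \<subseteq> Inl -` \<Union>C" "B \<subseteq> Inr -` \<Union>C" using S0 by blast+
      have "\<Union>C \<in> P" unfolding P_def using 1 2 3 4 by simp
      then show ?thesis by blast
    qed
  qed
  then obtain M where MP: "M \<in> P" and Mmax: "\<forall>S\<in>P. M \<subseteq> S \<longrightarrow> S = M" by blast
  define A' where "A' = Inl -` M"
  define B' where "B' = Inr -` M"
  have Mrep: "M = Inl ` A' \<union> Inr ` B'"
    unfolding A'_def B'_def
    apply (rule set_eqI)
    subgoal for z by (cases z) auto
    done
  have A': "A' \<in> famL X R" and B': "B' \<in> famU X R" and AA': "A \<subseteq> A'" and BB': "B \<subseteq> B'"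
    and dis: "A' \<inter> B' = {}"
    using MP unfolding P_def A'_def B'_def by blast+
  have A'X: "A' \<subseteq> X" using A' by (simp add: famL_def)
  have B'X: "B' \<subseteq> X" using B' by (simp add: famU_def)
  have maxpair: "A'' = A'"
    if h: "A'' \<in> famL X R" "B'' \<in> famU X R" "A' \<subseteq> A''" "B' \<subseteq> B''" "A'' \<inter> B'' = {}" for A'' B''
  proof -
    define S where "S = Inl ` A'' \<union> Inr ` B''"
    have e1: "Inl -` S = A''" and e2: "Inr -` S = B''" unfolding S_def by auto
    have "S \<in> P" unfolding P_def using e1 e2 h AA' BB' by auto
    moreover have "M \<subseteq> S" unfolding Mrep S_def using h by auto
    ultimately have "S = M" using Mmax by blast
    then show ?thesis using e1 A'_def by simp
  qed
  have cover: "A' \<union> B' = X"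
  proof (rule ccontr)
    assume "A' \<union> B' \<noteq> X"
    then obtain p where p: "p \<in> X" "p \<notin> A'" "p \<notin> B'" using A'X B'X by blast
    have ipX: "insert p A' \<subseteq> X" "insert p B' \<subseteq> X" using p A'X B'X by auto
    define A2 where "A2 = I.hullL (insert p A')"
    have A2: "A2 \<in> famL X R" "insert p A' \<subseteq> A2"
      unfolding A2_def using I.hullL_fam[OF ipX(1)] I.hullL_sub[OF ipX(1)] by auto
    have "A2 \<inter> B' \<noteq> {}"
    proof
      assume "A2 \<inter> B' = {}"
      then have "A2 = A'" using maxpair[OF A2(1) B'] A2(2) by blast
      then show False using A2(2) p by blast
    qed
    then obtain b' where "b' \<in> A2" "b' \<in> B'" by blast
    then have "b' \<in> B' \<and> b' \<in> X \<and> (\<exists>a. finite a \<and> a \<subseteq> insert p A' \<and> R {b'} a)"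
      unfolding A2_def I.hullL_def by simp
    then obtain a where b': "b' \<in> B'" "b' \<in> X" "finite a" "a \<subseteq> insert p A'" "R {b'} a"
      by blast
    have pa: "p \<in> a"
    proof (rule ccontr)
      assume "p \<notin> a"
      then have "a \<subseteq> A'" using b' by blast
      then have "convL X R a \<subseteq> A'" using A' b' unfolding famL_def by blast
      then have "b' \<in> A'" using b' by (auto simp: convL_def)
      then show False using dis b' by blast
    qed
    define B2 where "B2 = J.hullL (insert p B')"
    have B2: "B2 \<in> famU X R" "insert p B' \<subseteq> B2"
      unfolding B2_def famU_sym using J.hullL_fam[OF ipX(2)] J.hullL_sub[OF ipX(2)] by auto
    have "A' \<inter> B2 \<noteq> {}"
    proof
      assume "A' \<inter> B2 = {}"
      then have "A' = A'" by simp
      have "B2 = B'"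
      proof -
        define S where "S = Inl ` A' \<union> Inr ` B2"
        have e1: "Inl -` S = A'" and e2: "Inr -` S = B2" unfolding S_def by auto
        have "S \<in> P" unfolding P_def using e1 e2 \<open>A' \<inter> B2 = {}\<close> A' B2 AA' BB' by auto
        moreover have "M \<subseteq> S" unfolding Mrep S_def using B2 by auto
        ultimately have "S = M" using Mmax by blast
        then show ?thesis using e2 B'_def by simp
      qed
      then show False using B2(2) p by blast
    qed
    then obtain a' where "a' \<in> A'" "a' \<in> B2" by blast
    then have "a' \<in> A' \<and> a' \<in> X \<and> (\<exists>b. finite b \<and> b \<subseteq> insert p B' \<and> R b {a'})"
      unfolding B2_def J.hullL_def by simp
    then obtain b where a': "a' \<in> A'" "a' \<in> X" "finite b" "b \<subseteq> insert p B'" "R b {a'}"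
      by blast
    have pb: "p \<in> b"
    proof (rule ccontr)
      assume "p \<notin> b"
      then have "b \<subseteq> B'" using a' by blast
      then have "convU X R b \<subseteq> B'" using B' a' unfolding famU_def by blast
      then have "a' \<in> B'" using a' by (auto simp: convU_def)
      then show False using dis a' by blast
    qed
    define a0 where "a0 = a - {p}"
    define b0 where "b0 = b - {p}"
    have a0: "a = a0 \<union> {p}" "a0 \<subseteq> A'" "finite a0" using pa b' unfolding a0_def by auto
    have b0: "b = b0 \<union> {p}" "b0 \<subseteq> B'" "finite b0" using pb a' unfolding b0_def by auto
    have a0X: "a0 \<subseteq> X" and b0X: "b0 \<subseteq> X" using a0 b0 A'X B'X by blast+
    have Rab: "R (b0 \<union> {b'}) ({a'} \<union> a0)"
    proof -
      have r1: "R (b0 \<union> {p}) {a'}" using a'(5) unfolding b0(1)[symmetric] .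
      have r2: "R {b'} (a0 \<union> {p})" using b'(5) unfolding a0(1)[symmetric] .
      show ?thesis
        by (rule I.ax3[of b0 "{a'}" "{b'}" a0 p, OF _ _ _ _ _ _ _ _ _ r1 r2]) (simp_all add: b0(3) a0(3) b0X a0X a'(2) b'(2) p(1))
    qed
    have "\<exists>q\<in>X. R (b0 \<union> {b'}) {q} \<and> R {q} ({a'} \<union> a0)"
      by (rule I.ax4[OF _ _ _ _ Rab]) (simp_all add: b0(3) a0(3) b0X a0X a'(2) b'(2))
    then obtain q where q: "q \<in> X" "R (b0 \<union> {b'}) {q}" "R {q} ({a'} \<union> a0)"
      by blast
    have Uclos: "convU X R c \<subseteq> B'" if "finite c" "c \<subseteq> B'" for c
      using B' that unfolding famU_def by blast
    have Lclos: "convL X R c \<subseteq> A'" if "finite c" "c \<subseteq> A'" for c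
      using A' that unfolding famL_def by blast
    have "convU X R (b0 \<union> {b'}) \<subseteq> B'" by (rule Uclos) (use b0 b' in auto)
    then have "q \<in> B'" using q by (auto simp: convU_def)
    moreover have "convL X R ({a'} \<union> a0) \<subseteq> A'" by (rule Lclos) (use a0 a' in auto)
    then have "q \<in> A'" using q by (auto simp: convL_def)
    ultimately show False using dis by blast
  qed
  have "X - B' = A'" using cover dis by blast
  then show ?thesis using B' A' BB' AA' dis by (intro bexI[of _ B']) auto
qed

theorem mainTheorem10:
  fixes X :: "'a set" and R :: "'a set \<Rightarrow> 'a set \<Rightarrow> bool"
  assumes "iota_axioms X R"
  shows "normal_biconvexity X (famL X R) (famU X R)
    \<and> (\<forall>a b. finite a \<and> finite b \<and> a \<subseteq> X \<and> b \<subseteq> X \<longrightarrow>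
          (R a b \<longleftrightarrow> convU X R a \<inter> convL X R b \<noteq> {}))"
proof -
  interpret I: iota X R by (rule iota_I[OF assms])
  have 1: "normal_biconvexity X (famL X R) (famU X R)"
    unfolding normal_biconvexity_def biconvexity_space_def
  proof (intro conjI ballI impI)
    show "convexity X (famL X R)" by (rule convexity_famL)
    show "convexity X (famU X R)" by (rule convexity_famU)
  next
    fix x y assume "x \<in> X" "y \<in> X" "x \<noteq> y"
    then show "conv_hull X (famL X R) {x} \<inter> conv_hull X (famU X R) {y} = {}
        \<or> conv_hull X (famU X R) {x} \<inter> conv_hull X (famL X R) {y} = {}"
      by (rule N1[OF assms])
  next
    fix A B assume "A \<in> famL X R" "B \<in> famU X R" "A \<inter> B = {}"
    then show "\<exists>H\<in>famU X R. X - H \<in> famL X R \<and> B \<subseteq> H \<and> A \<inter> H = {}"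
      by (rule N2[OF assms])
  qed
  have 2: "R a b \<longleftrightarrow> convU X R a \<inter> convL X R b \<noteq> {}"
    if ab: "finite a" "finite b" "a \<subseteq> X" "b \<subseteq> X" for a b
  proof
    assume "R a b"
    then obtain p where "p \<in> X" "R a {p}" "R {p} b" using I.ax4[OF ab] by blast
    then show "convU X R a \<inter> convL X R b \<noteq> {}" by (auto simp: convU_def convL_def)
  next
    assume "convU X R a \<inter> convL X R b \<noteq> {}"
    then obtain p where "p \<in> X" "R a {p}" "R {p} b" by (auto simp: convU_def convL_def)
    then show "R a b" by (rule I.trans[OF ab])
  qed
  show ?thesis using 1 2 by blast
qed

end
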